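(* Let a countable group $G$ act on a set $X$, let $\Phi=(\ell,\phi,\mathcal{Z},\Gamma,\mathcal{H})$ be a chart for $G$, let $\epsilon>0$, let $q$ satisfy $6\epsilon<q<1-\epsilon$, and let $A\subseteq\mathbb{Z}^\ell\times\Gamma$ be a centered rectangle. Let $E$ be a $(\Phi,A,\epsilon)$-rectangular equivalence relation on $X$ and suppose the $E$-class $U$ is $(\Phi,\delta)$-roughly $B$ at $x\in X^{\mathcal{H}}$, where $B$ is a rectangle with $A\sqsubseteq B$, $2^{22\ell}\cdot B\subseteq\mathrm{dom}(\phi)$, and $2\delta\cdot B\sqsubseteq\epsilon\cdot A$. Writing $b=\mathrm{L}(B)$, for each $1\le i\le\ell$, $$\partial_i^\Phi(E,q\cdot A)\cap U\subseteq\phi\big(-b_i\cdot e_i+B^i+2q\cdot A\big)\cdot x\ \cup\ \phi\big(b_i\cdot e_i+B^i+2q\cdot A\big)\cdot x.$$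
   Context: Rectangles: Let $\Gamma$ be a finite additive abelian group with identity $0_\Gamma$ and $\ell\in\mathbb{N}$. Elements $v$ of $\mathbb{R}^\ell\times\Gamma$ have coordinates $v_1,\dots,v_\ell\in\mathbb{R}$, $v_{\ell+1}\in\Gamma$; $\mathbf{0}$ has first $\ell$ coordinates $0$, last $0_\Gamma$; $e_i$ has $i$-th coordinate $1$, other real coordinates $0$, last $0_\Gamma$; $\lambda\cdot v=(\lambda v_1,\dots,\lambda v_\ell,v_{\ell+1})$. $\mathrm{Rec}(a)=\{b\in\mathbb{Z}^\ell\times\Gamma: -|a_i|\le b_i\le|a_i|,\ 1\le i\le\ell\}$. A rectangle is $c+\mathrm{Rec}(a)$ with $c,a\in\mathbb{Z}^\ell\times\Gamma$; uniquely written with center $c\in\mathbb{Z}^\ell\times\{0_\Gamma\}$ and radius vector $\mathrm{L}(A)=a\in\mathbb{N}^\ell\times\{0_\Gamma\}$, entries $\mathrm{L}_i(A)$. Centered means center $\mathbf{0}$. $A\sqsubseteq B$ means $\mathrm{L}_i(A)\le\mathrm{L}_i(B)$ for all $i$. For $\lambda>0$, $\lambda\cdot A=c+\mathrm{Rec}(\lambda\cdot\mathrm{L}(A))$ ($c$ the center of $A$). $A^i=c+\mathrm{Rec}(\mathrm{L}(A)-\mathrm{L}_i(A)\cdot e_i)$. Sums are elementwise. Charts: a chart for $G$ is $\Phi=(\ell,\phi,\mathcal{Z},\Gamma,\mathcal{H})$ with $\mathcal{H}$ a finite collection of pairwise conjugate subgroups of $G$, $\Gamma$ finite abelian, $\mathcal{Z}$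 a centered rectangle with all $\mathrm{L}_i(\mathcal{Z})>0$, $\phi$ an injective map into $G$ with $\mathrm{dom}(\phi)$ a centered rectangle containing $3\cdot\mathcal{Z}$, $\phi(\mathbf{0})=1_G$, and for all $r,s\in\mathrm{dom}(\phi)$, $H\in\mathcal{H}$: $\phi(r)H=\phi(s)H\Rightarrow r=s$; $r+s+\mathcal{Z}\subseteq\mathrm{dom}(\phi)\Rightarrow\exists z\in\mathcal{Z}:\phi(r)\phi(s)H=\phi(r+s+z)H$; $r-s+\mathcal{Z}\subseteq\mathrm{dom}(\phi)\Rightarrow\exists z:\phi(r)\phi(s)^{-1}H=\phi(r-s+z)H$; $-r+s+\mathcal{Z}\subseteq\mathrm{dom}(\phi)\Rightarrow\exists z:\phi(r)^{-1}\phi(s)H=\phi(-r+s+z)H$; $-s+\mathcal{Z}\subseteq\mathrm{dom}(\phi)\Rightarrow\exists z:\phi(s)^{-1}H=\phi(-s+z)H$. $\phi(S)\cdot x=\{\phi(s)\cdot x:s\in S\}$; $X^{\mathcal{H}}=\{x\in X:\mathrm{Stab}(x)\in\mathcal{H}\}$. Rough rectangles: for a rectangle $B$ with $2\cdot B\subseteq\mathrm{dom}(\phi)$, $x\in X^{\mathcal{H}}$, $0<\delta<1$, $R\subseteq X$ is $(\Phi,\delta)$-roughly $B$ at $x$ if $2\cdot\mathcal{Z}\sqsubseteq\delta\cdot B$ and $\phi((1-\delta)\cdot B)\cdot x\subseteq R\subseteq\phi((1+\delta)\cdot B)\cdot x$. Rectangular: for $A$ centered and $0<\epsilon<1$, $E$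 is $(\Phi,A,\epsilon)$-rectangular if every $E$-class not meeting $X^{\mathcal{H}}$ is a singleton and every $E$-class $U$ meeting $X^{\mathcal{H}}$ is $(\Phi,\delta)$-roughly $B$ at some point of $X^{\mathcal{H}}$ for some $\delta>0$ and rectangle $B$ with $A\sqsubseteq B$, $2^{22\ell}\cdot B\subseteq\mathrm{dom}(\phi)$, $2\delta\cdot B\sqsubseteq\epsilon\cdot A$. Boundary: for $A'\subseteq\mathrm{dom}(\phi)$ centered and $1\le i\le\ell$, $\partial_i^\Phi(E,A')$ is the set of $x\in X^{\mathcal{H}}$ with $[\phi(A'^i-\mathrm{L}_i(A')\cdot e_i)\cdot x]_E\cap[\phi(A'^i+\mathrm{L}_i(A')\cdot e_i)\cdot x]_E=\varnothing$, $[Y]_E$ denoting the $E$-saturation. *)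

theory Defs
  imports Complex_Main "HOL-Algebra.Group_Action" "HOL-Library.Function_Algebras"
    "HOL-Library.Product_Plus" "HOL-Library.Countable_Set"
begin

text \<open>Elements of Z^l x Gamma: an integer vector indexed by 1..l (zero outside) and an element
  of the finite abelian group Gamma (a type of class finite, ab_group_add).\<close>
type_synonym 'g pt = "(nat \<Rightarrow> int) \<times> 'g"

definition normvec :: "nat \<Rightarrow> (nat \<Rightarrow> 'b::zero) \<Rightarrow> bool" where
  "normvec l f \<longleftrightarrow> (\<forall>i. i \<notin> {1..l} \<longrightarrow> f i = 0)"

definition Rec :: "nat \<Rightarrow> (nat \<Rightarrow> real) \<Rightarrow> ('g::zero) pt set" where
  "Rec l a = {p. normvec l (fst p) \<and>
      (\<forall>i\<in>{1..l}. - \<bar>a i\<bar> \<le> real_of_int (fst p i) \<and> real_of_int (fst p i) \<le> \<bar>a i\<bar>)}"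

definition rect :: "nat \<Rightarrow> (nat \<Rightarrow> int) \<Rightarrow> (nat \<Rightarrow> real) \<Rightarrow> ('g::monoid_add) pt set" where
  "rect l c a = (\<lambda>r. (c, 0) + r) ` Rec l a"

text \<open>L_i(c + Rec(a)) = floor |a_i|; A \<sqsubseteq> B compares these entries.\<close>
definition rect_le :: "nat \<Rightarrow> (nat \<Rightarrow> real) \<Rightarrow> (nat \<Rightarrow> real) \<Rightarrow> bool" where
  "rect_le l a b \<longleftrightarrow> (\<forall>i\<in>{1..l}. \<lfloor>\<bar>a i\<bar>\<rfloor> \<le> \<lfloor>\<bar>b i\<bar>\<rfloor>)"

definition unitv :: "nat \<Rightarrow> nat \<Rightarrow> int" where
  "unitv i = (\<lambda>j. if j = i then 1 else 0)"

definition msum :: "'a::plus set \<Rightarrow> 'a set \<Rightarrow> 'a set" where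
  "msum S T = {s + t | s t. s \<in> S \<and> t \<in> T}"

definition domset :: "nat \<Rightarrow> (nat \<Rightarrow> nat) \<Rightarrow> ('g::monoid_add) pt set" where
  "domset l d = rect l 0 (\<lambda>i. real (d i))"

definition phi_img :: "('b \<Rightarrow> 'x \<Rightarrow> 'x) \<Rightarrow> nat \<Rightarrow> (('g::monoid_add) pt \<Rightarrow> 'b) \<Rightarrow> (nat \<Rightarrow> nat)
      \<Rightarrow> 'g pt set \<Rightarrow> 'x \<Rightarrow> 'x set" where
  "phi_img act l \<phi> d S x = {act (\<phi> s) x | s. s \<in> S \<inter> domset l d}"

text \<open>Chart (l, phi, Z, Gamma, H): Gamma is the type 'g, Z = Rec(z), dom(phi) = Rec(d).\<close>
definition chart :: "('b, 'm) monoid_scheme \<Rightarrow> nat \<Rightarrow> (('g::{finite,ab_group_add}) pt \<Rightarrow> 'b)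
     \<Rightarrow> (nat \<Rightarrow> nat) \<Rightarrow> (nat \<Rightarrow> nat) \<Rightarrow> 'b set set \<Rightarrow> bool" where
  "chart G l \<phi> z d \<H> \<longleftrightarrow>
     finite \<H> \<and> (\<forall>H\<in>\<H>. subgroup H G) \<and>
     (\<forall>H\<in>\<H>. \<forall>K\<in>\<H>. \<exists>g\<in>carrier G. K = (g <#\<^bsub>G\<^esub> H) #>\<^bsub>G\<^esub> inv\<^bsub>G\<^esub> g) \<and>
     normvec l z \<and> (\<forall>i\<in>{1..l}. z i > 0) \<and> normvec l d \<and>
     inj_on \<phi> (domset l d) \<and> \<phi> ` domset l d \<subseteq> carrier G \<and>
     (rect l 0 (\<lambda>i. 3 * real (z i)) :: 'g pt set) \<subseteq> domset l d \<and>
     \<phi> 0 = \<one>\<^bsub>G\<^esub> \<and>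
     (\<forall>r\<in>domset l d. \<forall>s\<in>domset l d. \<forall>H\<in>\<H>.
        (\<phi> r <#\<^bsub>G\<^esub> H = \<phi> s <#\<^bsub>G\<^esub> H \<longrightarrow> r = s) \<and>
        ((\<lambda>v. r + s + v) ` rect l 0 (\<lambda>i. real (z i)) \<subseteq> domset l d \<longrightarrow>
           (\<exists>v\<in>rect l 0 (\<lambda>i. real (z i)).
              (\<phi> r \<otimes>\<^bsub>G\<^esub> \<phi> s) <#\<^bsub>G\<^esub> H = \<phi> (r + s + v) <#\<^bsub>G\<^esub> H)) \<and>
        ((\<lambda>v. r - s + v) ` rect l 0 (\<lambda>i. real (z i)) \<subseteq> domset l d \<longrightarrow>
           (\<exists>v\<in>rect l 0 (\<lambda>i. real (z i)).
              (\<phi> r \<otimes>\<^bsub>G\<^esub> inv\<^bsub>G\<^esub> \<phi> s) <#\<^bsub>G\<^esub> H = \<phi> (r - s + v) <#\<^bsub>G\<^esub> H)) \<and>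
        ((\<lambda>v. - r + s + v) ` rect l 0 (\<lambda>i. real (z i)) \<subseteq> domset l d \<longrightarrow>
           (\<exists>v\<in>rect l 0 (\<lambda>i. real (z i)).
              (inv\<^bsub>G\<^esub> \<phi> r \<otimes>\<^bsub>G\<^esub> \<phi> s) <#\<^bsub>G\<^esub> H = \<phi> (- r + s + v) <#\<^bsub>G\<^esub> H)) \<and>
        ((\<lambda>v. - s + v) ` rect l 0 (\<lambda>i. real (z i)) \<subseteq> domset l d \<longrightarrow>
           (\<exists>v\<in>rect l 0 (\<lambda>i. real (z i)).
              inv\<^bsub>G\<^esub> \<phi> s <#\<^bsub>G\<^esub> H = \<phi> (- s + v) <#\<^bsub>G\<^esub> H)))"

definition XH :: "('b, 'm) monoid_scheme \<Rightarrow> ('b \<Rightarrow> 'x \<Rightarrow> 'x) \<Rightarrow> 'x set \<Rightarrow> 'b set set \<Rightarrow> 'x set" where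
  "XH G act X \<H> = {x \<in> X. stabilizer G act x \<in> \<H>}"

text \<open>R is (Phi,delta)-roughly B at x, where B has centre c and radius vector b.\<close>
definition roughly :: "('b, 'm) monoid_scheme \<Rightarrow> ('b \<Rightarrow> 'x \<Rightarrow> 'x) \<Rightarrow> 'x set \<Rightarrow> nat
     \<Rightarrow> (('g::{finite,ab_group_add}) pt \<Rightarrow> 'b) \<Rightarrow> (nat \<Rightarrow> nat) \<Rightarrow> (nat \<Rightarrow> nat) \<Rightarrow> 'b set set
     \<Rightarrow> real \<Rightarrow> (nat \<Rightarrow> int) \<Rightarrow> (nat \<Rightarrow> nat) \<Rightarrow> 'x \<Rightarrow> 'x set \<Rightarrow> bool" where
  "roughly G act X l \<phi> z d \<H> \<delta> c b x R \<longleftrightarrow>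
     (rect l c (\<lambda>i. 2 * real (b i)) :: 'g pt set) \<subseteq> domset l d \<and> x \<in> XH G act X \<H> \<and>
     0 < \<delta> \<and> \<delta> < 1 \<and>
     rect_le l (\<lambda>i. 2 * real (z i)) (\<lambda>i. \<delta> * real (b i)) \<and>
     phi_img act l \<phi> d (rect l c (\<lambda>i. (1 - \<delta>) * real (b i))) x \<subseteq> R \<and>
     R \<subseteq> phi_img act l \<phi> d (rect l c (\<lambda>i. (1 + \<delta>) * real (b i))) x"

text \<open>E is (Phi, A, epsilon)-rectangular, A the centered rectangle with radius vector a.\<close>
definition rectangular :: "('b, 'm) monoid_scheme \<Rightarrow> ('b \<Rightarrow> 'x \<Rightarrow> 'x) \<Rightarrow> 'x set \<Rightarrow> nat
     \<Rightarrow> (('g::{finite,ab_group_add}) pt \<Rightarrow> 'b) \<Rightarrow> (nat \<Rightarrow> nat) \<Rightarrow> (nat \<Rightarrow> nat) \<Rightarrow> 'b set set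
     \<Rightarrow> (nat \<Rightarrow> nat) \<Rightarrow> real \<Rightarrow> ('x \<times> 'x) set \<Rightarrow> bool" where
  "rectangular G act X l \<phi> z d \<H> a \<epsilon> E \<longleftrightarrow>
     (\<forall>y\<in>X. E `` {y} \<inter> XH G act X \<H> = {} \<longrightarrow> E `` {y} = {y}) \<and>
     (\<forall>y\<in>X. E `` {y} \<inter> XH G act X \<H> \<noteq> {} \<longrightarrow>
        (\<exists>x'\<in>XH G act X \<H>. \<exists>\<delta>>0. \<exists>c b. normvec l c \<and> normvec l b \<and>
           rect_le l (\<lambda>i. real (a i)) (\<lambda>i. real (b i)) \<and>
           (rect l c (\<lambda>i. 2 ^ (22 * l) * real (b i)) :: 'g pt set) \<subseteq> domset l d \<and>
           rect_le l (\<lambda>i. 2 * \<delta> * real (b i)) (\<lambda>i. \<epsilon> * real (a i)) \<and>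
           roughly G act X l \<phi> z d \<H> \<delta> c b x' (E `` {y})))"

definition bdry :: "('b, 'm) monoid_scheme \<Rightarrow> ('b \<Rightarrow> 'x \<Rightarrow> 'x) \<Rightarrow> 'x set \<Rightarrow> nat
     \<Rightarrow> (('g::{finite,ab_group_add}) pt \<Rightarrow> 'b) \<Rightarrow> (nat \<Rightarrow> nat) \<Rightarrow> 'b set set
     \<Rightarrow> ('x \<times> 'x) set \<Rightarrow> (nat \<Rightarrow> real) \<Rightarrow> nat \<Rightarrow> 'x set" where
  "bdry G act X l \<phi> d \<H> E a' i =
     {x \<in> XH G act X \<H>.
        E `` phi_img act l \<phi> d (rect l (\<lambda>j. - \<lfloor>\<bar>a' i\<bar>\<rfloor> * unitv i j) (a'(i := 0))) x \<inter>
        E `` phi_img act l \<phi> d (rect l (\<lambda>j. \<lfloor>\<bar>a' i\<bar>\<rfloor> * unitv i j) (a'(i := 0))) x = {}}"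

end

theory Submission imports Defs begin

lemma rect_mem:
  "(p::('g::ab_group_add) pt) \<in> rect l c a \<longleftrightarrow> normvec l (\<lambda>j. fst p j - c j) \<and>
     (\<forall>j\<in>{1..l}. \<bar>real_of_int (fst p j - c j)\<bar> \<le> \<bar>a j\<bar>)"
proof
  assume "p \<in> rect l c a"
  then obtain r where r: "r \<in> Rec l a" "p = (c,0) + r" unfolding rect_def by auto
  have e: "(\<lambda>j. fst p j - c j) = fst r" using r(2) by (auto simp: algebra_simps)
  show "normvec l (\<lambda>j. fst p j - c j) \<and> (\<forall>j\<in>{1..l}. \<bar>real_of_int (fst p j - c j)\<bar> \<le> \<bar>a j\<bar>)"
    using r(1) unfolding e Rec_def by (auto simp: abs_le_iff fun_eq_iff e[unfolded fun_eq_iff, rule_format])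
next
  assume h: "normvec l (\<lambda>j. fst p j - c j) \<and> (\<forall>j\<in>{1..l}. \<bar>real_of_int (fst p j - c j)\<bar> \<le> \<bar>a j\<bar>)"
  have "(fst p - c, snd p) \<in> Rec l a" using h unfolding Rec_def by (auto simp: abs_le_iff fun_diff_def)
  moreover have "p = (c,0) + (fst p - c, snd p)" by (cases p) auto
  ultimately show "p \<in> rect l c a" unfolding rect_def by blast
qed

lemma phi_img_mem: "y \<in> phi_img act l \<phi> d S x \<longleftrightarrow> (\<exists>s. s \<in> S \<and> s \<in> domset l d \<and> y = act (\<phi> s) x)"
  unfolding phi_img_def by auto

lemma rect_le_D: "rect_le l a b \<Longrightarrow> j \<in> {1..l} \<Longrightarrow> \<lfloor>\<bar>a j\<bar>\<rfloor> \<le> \<lfloor>\<bar>b j\<bar>\<rfloor>"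
  unfolding rect_le_def by auto

lemma key_act:
  assumes "group G" "group_action G X act" "x \<in> X" "g \<in> carrier G" "p \<in> carrier G"
    "g <#\<^bsub>G\<^esub> stabilizer G act x = p <#\<^bsub>G\<^esub> stabilizer G act x"
  shows "act g x = act p x"
proof -
  interpret group G by fact
  interpret A: group_action G X act by fact
  have "\<one>\<^bsub>G\<^esub> \<in> stabilizer G act x"
    using A.stabilizer_one_closed assms(3) by blast
  then have "g \<in> g <#\<^bsub>G\<^esub> stabilizer G act x" using assms(4) unfolding l_coset_def by force
  then obtain h where h: "h \<in> stabilizer G act x" "g = p \<otimes>\<^bsub>G\<^esub> h"
    using assms(6) unfolding l_coset_def by auto
  have hc: "h \<in> carrier G" "act h x = x" using h(1) unfolding stabilizer_def by auto
  show ?thesis using A.composition_rule[OF assms(3) assms(5) hc(1)] h(2) hc(2) by simp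
qed

lemma arith_key:
  fixes \<alpha> \<beta> \<zeta> :: nat and \<delta> \<epsilon> q :: real
  assumes "0<\<delta>" "\<delta><1" "\<epsilon>>0" "6*\<epsilon><q" "q<1-\<epsilon>" "\<zeta>>0"
   "\<lfloor>\<bar>2 * real \<zeta>\<bar>\<rfloor> \<le> \<lfloor>\<bar>\<delta> * real \<beta>\<bar>\<rfloor>" "\<lfloor>\<bar>2*\<delta>*real \<beta>\<bar>\<rfloor> \<le> \<lfloor>\<bar>\<epsilon> * real \<alpha>\<bar>\<rfloor>"
   "\<lfloor>\<bar>real \<alpha>\<bar>\<rfloor> \<le> \<lfloor>\<bar>real \<beta>\<bar>\<rfloor>"
  shows "2*\<delta>*\<beta> + \<zeta> \<le> q*\<alpha> - 1 \<and> \<delta>*\<beta> \<le> q*\<alpha> \<and> q * \<alpha> \<le> \<beta> \<and> 0 \<le> q*\<alpha>"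
proof -
  define D where "D = \<delta> * real \<beta>"
  define Ea where "Ea = \<epsilon> * real \<alpha>"
  define Q where "Q = q * real \<alpha>"
  have ab: "\<alpha> \<le> \<beta>" using assms(9) by simp
  have D0: "0 \<le> D" using assms(1) by (simp add: D_def)
  have E0: "0 \<le> Ea" using assms(3) by (simp add: Ea_def)
  have fl: "\<lfloor>2 * real \<zeta>\<rfloor> = int (2*\<zeta>)"
    by (metis floor_of_nat of_nat_mult of_nat_numeral)
  have z: "int (2 * \<zeta>) \<le> \<lfloor>D\<rfloor>" using assms(7) D0 fl by (simp add: D_def)
  hence "real (2 * \<zeta>) \<le> D" by linarith
  hence zD: "2 * real \<zeta> \<le> D" by simp
  have f2: "\<lfloor>2*D\<rfloor> \<le> \<lfloor>Ea\<rfloor>" using assms(8) D0 E0 by (simp add: D_def Ea_def mult.assoc)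
  have "2 * D \<ge> 4" using zD assms(6) by linarith
  hence "\<lfloor>2*D\<rfloor> \<ge> 4" by linarith
  hence E4: "Ea \<ge> 4" using f2 by linarith
  have DE: "2*D < Ea + 1" using f2 by linarith
  have QE: "Q \<ge> 6 * Ea" unfolding Q_def Ea_def using assms(4) by (intro mult_right_mono[of "6*\<epsilon>" q "real \<alpha>", simplified mult.assoc]) auto
  have Qa: "Q \<le> \<alpha>" unfolding Q_def using assms(3,5) mult_right_mono[of q 1 "real \<alpha>"] by auto
  have "2*D + \<zeta> \<le> Q - 1" using zD DE QE E4 by linarith
  moreover have "D \<le> Q" using zD DE QE E4 by linarith
  moreover have "Q \<le> \<beta>" using Qa ab by linarith
  moreover have "0 \<le> Q" using QE E4 by linarith
  ultimately show ?thesis by (simp add: D_def Q_def mult.assoc)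
qed

lemma bd_le_d:
  assumes "normvec l c" "(rect l c (\<lambda>i. 2 * real (b i)) :: ('g::ab_group_add) pt set) \<subseteq> domset l d"
    "j \<in> {1..l}"
  shows "\<bar>c j\<bar> + 2 * int (b j) \<le> int (d j)"
proof -
  define w where "w = (\<lambda>j. if j \<in> {1..l} then (if c j \<ge> 0 then 2 * int (b j) else - 2 * int (b j)) else 0)"
  have "((\<lambda>j. c j + w j), 0::'g) \<in> rect l c (\<lambda>i. 2 * real (b i))"
    unfolding rect_mem using assms(1) by (auto simp: w_def normvec_def)
  hence "((\<lambda>j. c j + w j), 0::'g) \<in> domset l d" using assms(2) by blast
  hence "\<bar>real_of_int (c j + w j)\<bar> \<le> real (d j)"
    unfolding domset_def rect_mem using assms(3) by auto
  thus ?thesis using assms(3) by (auto simp: w_def split: if_splits)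
qed

lemma msum_mem: "p \<in> msum S T \<longleftrightarrow> (\<exists>s t. s \<in> S \<and> t \<in> T \<and> p = s + t)"
  unfolding msum_def by auto

lemma t_arith: fixes V L :: int and B Z D Qa :: real
 assumes "\<bar>real_of_int V\<bar> \<le> B + D" "2*D + Z \<le> Qa - 1" "Qa \<le> B" "0 \<le> D" "0 \<le> L" "real_of_int L \<le> Qa" "Qa - 1 < L"
 shows "\<bar>real_of_int (V + (if \<bar>V\<bar> \<le> L then -V else if V > 0 then -L else L))\<bar> + Z \<le> B - D"
proof (cases "\<bar>V\<bar> \<le> L")
  case True then show ?thesis using assms by simp
next
  case False
  hence "real_of_int L < \<bar>real_of_int V\<bar>" by linarith
  then show ?thesis using assms False by (cases "V > 0") (auto simp: abs_if split: if_splits)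
qed
lemma i_arith: fixes V L S W :: int and B Z D Qa :: real
 assumes "\<bar>real_of_int V\<bar> + 2*Qa < B" "2*D + Z \<le> Qa - 1" "0 \<le> D" "\<bar>S\<bar> = L" "real_of_int L \<le> Qa" "\<bar>real_of_int W\<bar> \<le> Z"
 shows "\<bar>real_of_int (S + V + W)\<bar> \<le> B - D"
proof -
  have "\<bar>real_of_int S\<bar> = L" using assms(4) by linarith
  thus ?thesis using assms by (simp add: abs_if split: if_splits) linarith?
qed

theorem lemma6p3:
  fixes G :: "('b, 'm) monoid_scheme" and act :: "'b \<Rightarrow> 'x \<Rightarrow> 'x" and X :: "'x set"
    and l :: nat and \<phi> :: "('g::{finite,ab_group_add}) pt \<Rightarrow> 'b"
    and z d a :: "nat \<Rightarrow> nat" and \<H> :: "'b set set"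
    and \<epsilon> q \<delta> :: real and E :: "('x \<times> 'x) set" and U :: "'x set"
    and c :: "nat \<Rightarrow> int" and b :: "nat \<Rightarrow> nat" and x :: 'x
  assumes "group G" and "countable (carrier G)" and "group_action G X act"
    and "chart G l \<phi> z d \<H>"
    and "\<epsilon> > 0" and "6 * \<epsilon> < q" and "q < 1 - \<epsilon>"
    and "normvec l a"
    and "equiv X E"
    and "rectangular G act X l \<phi> z d \<H> a \<epsilon> E"
    and "U \<in> X // E"
    and "normvec l c" and "normvec l b"
    and "roughly G act X l \<phi> z d \<H> \<delta> c b x U"
    and "rect_le l (\<lambda>i. real (a i)) (\<lambda>i. real (b i))"
    and "(rect l c (\<lambda>i. 2 ^ (22 * l) * real (b i)) :: 'g pt set) \<subseteq> domset l d"
    and "rect_le l (\<lambda>i. 2 * \<delta> * real (b i)) (\<lambda>i. \<epsilon> * real (a i))"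
  shows "\<forall>i\<in>{1..l}.
     bdry G act X l \<phi> d \<H> E (\<lambda>j. q * real (a j)) i \<inter> U \<subseteq>
       phi_img act l \<phi> d
         (msum {(\<lambda>j. - int (b i) * unitv i j, 0)}
            (msum (rect l c ((\<lambda>j. real (b j))(i := 0))) (rect l 0 (\<lambda>j. 2 * q * real (a j))))) x
     \<union> phi_img act l \<phi> d
         (msum {(\<lambda>j. int (b i) * unitv i j, 0)}
            (msum (rect l c ((\<lambda>j. real (b j))(i := 0))) (rect l 0 (\<lambda>j. 2 * q * real (a j))))) x"
proof (intro ballI subsetI)
  fix i y assume i: "i \<in> {1..l}" and y: "y \<in> bdry G act X l \<phi> d \<H> E (\<lambda>j. q * real (a j)) i \<inter> U"
  note grp = assms(1) and ga = assms(3)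
  interpret group G by fact
  interpret A: group_action G X act by fact
  have ch: "finite \<H>" "inj_on \<phi> (domset l d)" "\<phi> ` domset l d \<subseteq> carrier G" "normvec l z"
    "\<forall>j\<in>{1..l}. z j > 0"
    "\<And>r s H. r\<in>domset l d \<Longrightarrow> s\<in>domset l d \<Longrightarrow> H\<in>\<H> \<Longrightarrow>
        (\<lambda>v. r + s + v) ` rect l 0 (\<lambda>i. real (z i)) \<subseteq> domset l d \<Longrightarrow>
           (\<exists>v\<in>rect l 0 (\<lambda>i. real (z i)).
              (\<phi> r \<otimes>\<^bsub>G\<^esub> \<phi> s) <#\<^bsub>G\<^esub> H = \<phi> (r + s + v) <#\<^bsub>G\<^esub> H)"
    using assms(4) unfolding chart_def by blast+
  have R2: "(rect l c (\<lambda>i. 2 * real (b i)) :: 'g pt set) \<subseteq> domset l d"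
    and xXH: "x \<in> XH G act X \<H>" and dl: "0 < \<delta>" "\<delta> < 1"
    and rlz: "rect_le l (\<lambda>i. 2 * real (z i)) (\<lambda>i. \<delta> * real (b i))"
    and low: "phi_img act l \<phi> d (rect l c (\<lambda>i. (1 - \<delta>) * real (b i))) x \<subseteq> U"
    and up: "U \<subseteq> phi_img act l \<phi> d (rect l c (\<lambda>i. (1 + \<delta>) * real (b i))) x"
    using assms(14) unfolding roughly_def by blast+
  have xX: "x \<in> X" and Hx: "stabilizer G act x \<in> \<H>" using xXH unfolding XH_def by auto
  have AK: "2*\<delta>*b j + z j \<le> q*a j - 1 \<and> \<delta>*b j \<le> q*a j \<and> q * a j \<le> b j \<and> 0 \<le> q*a j"
    if j: "j \<in> {1..l}" for j
  proof (rule arith_key)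
    show "\<lfloor>\<bar>2 * real (z j)\<bar>\<rfloor> \<le> \<lfloor>\<bar>\<delta> * real (b j)\<bar>\<rfloor>" using rlz j unfolding rect_le_def by blast
    show "\<lfloor>\<bar>2 * \<delta> * real (b j)\<bar>\<rfloor> \<le> \<lfloor>\<bar>\<epsilon> * real (a j)\<bar>\<rfloor>" using assms(17) j unfolding rect_le_def by blast
    show "\<lfloor>\<bar>real (a j)\<bar>\<rfloor> \<le> \<lfloor>\<bar>real (b j)\<bar>\<rfloor>" using assms(15) j unfolding rect_le_def by blast
    show "0 < z j" using ch(5) j by blast
  qed (use dl assms(5-7) in auto)
  have bd: "b j \<le> d j" if "j \<in> {1..l}" for j
    using bd_le_d[OF assms(12) R2 that] by linarith
  have lowsub: "rect l c (\<lambda>i. (1 - \<delta>) * real (b i)) \<subseteq> (domset l d :: 'g pt set)"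
  proof
    fix p :: "'g pt" assume "p \<in> rect l c (\<lambda>i. (1 - \<delta>) * real (b i))"
    moreover have "\<bar>(1 - \<delta>) * real (b j)\<bar> \<le> \<bar>2 * real (b j)\<bar>" for j
    proof -
      have "(1-\<delta>) * real (b j) \<le> 2 * real (b j)" using dl by (intro mult_right_mono) auto
      thus ?thesis using dl by (simp add: abs_mult)
    qed
    ultimately have "p \<in> rect l c (\<lambda>i. 2 * real (b i))" unfolding rect_mem
      by (meson order_trans)
    thus "p \<in> domset l d" using R2 by blast
  qed
    obtain r where r: "r \<in> rect l c (\<lambda>i. (1 + \<delta>) * real (b i))" "r \<in> domset l d" "y = act (\<phi> r) x"
    proof -
      have "y \<in> phi_img act l \<phi> d (rect l c (\<lambda>i. (1 + \<delta>) * real (b i))) x" using y up by blast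
      thus ?thesis using that unfolding phi_img_mem by blast
    qed
    define v where "v = (\<lambda>j. fst r j - c j)"
    have vn: "normvec l v" and vb: "\<And>j. j\<in>{1..l} \<Longrightarrow> \<bar>real_of_int (v j)\<bar> \<le> (1 + \<delta>) * b j"
      using r(1) dl unfolding rect_mem v_def by (auto simp: abs_mult)
    have main: "\<not> (\<bar>real_of_int (v i)\<bar> + 2*q*a i < b i)"
    proof
      assume contra: "\<bar>real_of_int (v i)\<bar> + 2*q*a i < b i"
      define L where "L = (\<lambda>j. \<lfloor>q * real (a j)\<rfloor>)"
      define Li where "Li = \<lfloor>\<bar>q * real (a i)\<bar>\<rfloor>"
      have LiL: "Li = L i" using AK[OF i] by (simp add: Li_def L_def)
      have Lb: "0 \<le> L j \<and> real_of_int (L j) \<le> q*a j \<and> q * a j - 1 < L j" if j: "j\<in>{1..l}" for j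
        using AK[OF j] unfolding L_def by linarith
      define t where "t = (\<lambda>j. if j = i \<or> j \<notin> {1..l} then 0 else
          (if \<bar>v j\<bar> \<le> L j then - v j else if v j > 0 then - L j else L j))"
      have T1: "\<bar>real_of_int (v j + t j)\<bar> + z j \<le> b j - \<delta> * b j" if j: "j \<in> {1..l}" "j \<noteq> i" for j
      proof -
        have "t j = (if \<bar>v j\<bar> \<le> L j then - v j else if v j > 0 then - L j else L j)"
          using j by (simp add: t_def)
        moreover have "\<bar>real_of_int (v j)\<bar> \<le> b j + \<delta> * b j" using vb[OF j(1)] by (simp add: algebra_simps)
        ultimately show ?thesis using t_arith[of "v j" "b j" "\<delta> * b j" "z j" "q * a j" "L j"]
          AK[OF j(1)] Lb[OF j(1)] dl by simp
      qed
      have T2: "\<bar>real_of_int (t j)\<bar> \<le> q * a j" if j: "j \<in> {1..l}" for j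
        using Lb[OF j] AK[OF j] by (auto simp: t_def)
      have tn: "normvec l t" "t i = 0" by (auto simp: normvec_def t_def)
      have sh: "\<And>\<sigma> C. \<bar>\<sigma>\<bar> = (1::int) \<Longrightarrow> C = (\<lambda>j. \<sigma> * Li * unitv i j) \<Longrightarrow>
          \<exists>y'. y' \<in> U \<and> y' \<in> phi_img act l \<phi> d (rect l C ((\<lambda>j. q * real (a j))(i := 0))) y"
      proof -
        fix \<sigma> :: int and C assume \<sigma>: "\<bar>\<sigma>\<bar> = 1" and C: "C = (\<lambda>j. \<sigma> * Li * unitv i j)"
        have sL: "\<bar>\<sigma> * Li\<bar> = L i" using \<sigma> LiL Lb[OF i] by (simp add: abs_mult)
        have sL': "\<bar>real_of_int \<sigma> * real_of_int Li\<bar> = real_of_int (L i)" by (metis sL of_int_abs of_int_mult)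
        define s where "s = ((\<lambda>j. t j + \<sigma> * Li * unitv i j), 0::'g)"
        have s1: "s \<in> rect l C ((\<lambda>j. q * real (a j))(i := 0))"
          unfolding rect_mem using tn T2 AK by (auto simp: s_def C)
        have s2: "s \<in> domset l d"
          unfolding domset_def rect_mem
        proof (intro conjI ballI)
          show "normvec l (\<lambda>j. fst s j - (0::nat\<Rightarrow>int) j)"
            using tn i by (auto simp: s_def normvec_def unitv_def)
          fix j assume j: "j \<in> {1..l}"
          have "\<bar>real_of_int (fst s j)\<bar> \<le> b j"
          proof (cases "j = i")
            case True
            then show ?thesis using sL' tn Lb[OF i] AK[OF i] by (simp add: s_def unitv_def)
          next
            case False
            then show ?thesis using T2[OF j] AK[OF j] by (simp add: s_def unitv_def)
          qed
          then show "\<bar>real_of_int (fst s j - (0::nat\<Rightarrow>int) j)\<bar> \<le> \<bar>real (d j)\<bar>"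
            using bd[OF j] by simp
        qed
        have s3: "(\<lambda>w. s + r + w) ` rect l 0 (\<lambda>i. real (z i)) \<subseteq> rect l c (\<lambda>i. (1 - \<delta>) * real (b i))"
        proof
          fix p assume "p \<in> (\<lambda>w. s + r + w) ` rect l 0 (\<lambda>i. real (z i))"
          then obtain w' where w': "w' \<in> rect l 0 (\<lambda>i. real (z i))" "p = s + r + w'" by blast
          have wn: "normvec l (fst w')" "\<And>j. j \<in> {1..l} \<Longrightarrow> \<bar>real_of_int (fst w' j)\<bar> \<le> z j"
            using w'(1) unfolding rect_mem by auto
          have pe: "\<And>j. fst p j - c j = t j + \<sigma> * Li * unitv i j + v j + fst w' j"
            using w'(2) by (auto simp: s_def v_def)
          show "p \<in> rect l c (\<lambda>i. (1 - \<delta>) * real (b i))"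
            unfolding rect_mem pe
          proof (intro conjI ballI)
            show "normvec l (\<lambda>j. t j + \<sigma> * Li * unitv i j + v j + fst w' j)"
              using wn(1) vn tn i by (auto simp: normvec_def unitv_def)
            fix j assume j: "j \<in> {1..l}"
            have "0 \<le> (1-\<delta>) * real (b j)" using dl by simp
            hence ab: "\<bar>(1-\<delta>) * real (b j)\<bar> = b j - \<delta> * b j" by (simp add: algebra_simps)
            show "\<bar>real_of_int (t j + \<sigma> * Li * unitv i j + v j + fst w' j)\<bar> \<le> \<bar>(1-\<delta>) * real (b j)\<bar>"
              unfolding ab
            proof (cases "j = i")
              case True
              have "\<bar>real_of_int (\<sigma> * Li + v i + fst w' i)\<bar> \<le> b i - \<delta> * b i"
                using i_arith[of "v i" "q * a i" "b i" "\<delta> * b i" "z i" "\<sigma> * Li" "L i" "fst w' i"]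
                  contra AK[OF i] Lb[OF i] sL wn(2)[OF i] dl by (simp add: mult.assoc)
              then show "\<bar>real_of_int (t j + \<sigma> * Li * unitv i j + v j + fst w' j)\<bar> \<le> b j - \<delta> * b j"
                using True tn by (simp add: unitv_def)
            next
              case False
              have "\<bar>real_of_int (t j + v j + fst w' j)\<bar> \<le> \<bar>real_of_int (v j + t j)\<bar> + \<bar>real_of_int (fst w' j)\<bar>"
                by linarith
              then show "\<bar>real_of_int (t j + \<sigma> * Li * unitv i j + v j + fst w' j)\<bar> \<le> b j - \<delta> * b j"
                using False T1[OF j False] wn(2)[OF j] by (simp add: unitv_def)
            qed
          qed
        qed
        obtain vv where vv: "vv \<in> rect l 0 (\<lambda>i. real (z i))"
          "(\<phi> s \<otimes>\<^bsub>G\<^esub> \<phi> r) <#\<^bsub>G\<^esub> stabilizer G act x = \<phi> (s + r + vv) <#\<^bsub>G\<^esub> stabilizer G act x"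
          using ch(6)[OF s2 r(2) Hx] s3 lowsub by blast
        have inl: "s + r + vv \<in> rect l c (\<lambda>i. (1 - \<delta>) * real (b i))" using s3 vv(1) by blast
        have cs: "\<phi> s \<in> carrier G" "\<phi> r \<in> carrier G" "\<phi> (s+r+vv) \<in> carrier G"
          using ch(3) s2 r(2) inl lowsub by blast+
        have "act (\<phi> s) y = act (\<phi> (s+r+vv)) x"
          using key_act[OF grp ga xX m_closed[OF cs(1,2)] cs(3) vv(2)] A.composition_rule[OF xX cs(1,2)] r(3)
          by simp
        moreover have "act (\<phi> (s+r+vv)) x \<in> U"
        proof -
          have "act (\<phi> (s+r+vv)) x \<in> phi_img act l \<phi> d (rect l c (\<lambda>i. (1 - \<delta>) * real (b i))) x"
            unfolding phi_img_mem using inl lowsub by blast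
          thus ?thesis using low by blast
        qed
        moreover have "act (\<phi> s) y \<in> phi_img act l \<phi> d (rect l C ((\<lambda>j. q * real (a j))(i := 0))) y"
          unfolding phi_img_mem using s1 s2 by blast
        ultimately show "\<exists>y'. y' \<in> U \<and> y' \<in> phi_img act l \<phi> d (rect l C ((\<lambda>j. q * real (a j))(i := 0))) y"
          by auto
      qed
      obtain y1 where y1: "y1 \<in> U" "y1 \<in> phi_img act l \<phi> d (rect l (\<lambda>j. - Li * unitv i j) ((\<lambda>j. q * real (a j))(i := 0))) y"
        using sh[of "-1" "\<lambda>j. - Li * unitv i j"] by auto
      obtain y2 where y2: "y2 \<in> U" "y2 \<in> phi_img act l \<phi> d (rect l (\<lambda>j. Li * unitv i j) ((\<lambda>j. q * real (a j))(i := 0))) y"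
        using sh[of "1" "\<lambda>j. Li * unitv i j"] by auto
      have dis: "E `` phi_img act l \<phi> d (rect l (\<lambda>j. - Li * unitv i j) ((\<lambda>j. q * real (a j))(i := 0))) y \<inter>
          E `` phi_img act l \<phi> d (rect l (\<lambda>j. Li * unitv i j) ((\<lambda>j. q * real (a j))(i := 0))) y = {}"
        using y unfolding bdry_def Li_def by auto
      obtain u0 where u0: "u0 \<in> X" "U = E `` {u0}" using assms(11) by (auto elim: quotientE)
      have eq: "sym E" "trans E" "E \<subseteq> X \<times> X" "refl_on X E" using assms(9) unfolding equiv_def by auto
      have "(u0, y1) \<in> E" "(u0, y2) \<in> E" using y1(1) y2(1) u0(2) by auto
      hence e12: "(y1, y2) \<in> E" using eq by (meson symD transD)
      have "y2 \<in> X" using \<open>(u0, y2) \<in> E\<close> eq(3) by blast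
      hence "(y2, y2) \<in> E" using eq(4) unfolding refl_on_def by blast
      thus False using dis e12 y1(2) y2(2) by blast
    qed
    show "y \<in> phi_img act l \<phi> d
         (msum {(\<lambda>j. - int (b i) * unitv i j, 0)}
            (msum (rect l c ((\<lambda>j. real (b j))(i := 0))) (rect l 0 (\<lambda>j. 2 * q * real (a j))))) x
     \<union> phi_img act l \<phi> d
         (msum {(\<lambda>j. int (b i) * unitv i j, 0)}
            (msum (rect l c ((\<lambda>j. real (b j))(i := 0))) (rect l 0 (\<lambda>j. 2 * q * real (a j))))) x"
    proof -
    define \<sigma> where "\<sigma> = (if v i \<ge> 0 then 1 else -1 :: int)"
    define w where "w = (\<lambda>j. if j = i \<or> j \<notin> {1..l} then 0 else max (- int (b j)) (min (int (b j)) (v j)))"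
    define u where "u = (\<lambda>j. v j - w j - \<sigma> * int (b i) * unitv i j)"
    have req: "r = (\<lambda>j. \<sigma> * int (b i) * unitv i j, 0) + ((\<lambda>j. c j + w j, 0) + (u, snd r))"
      by (cases r) (auto simp: u_def v_def fun_eq_iff)
    have w1: "(\<lambda>j. c j + w j, 0::'g) \<in> rect l c ((\<lambda>j. real (b j))(i := 0))"
      unfolding rect_mem by (auto simp: w_def normvec_def)
    have u2: "(u, snd r) \<in> rect l 0 (\<lambda>j. 2 * q * real (a j))"
      unfolding rect_mem
    proof (intro conjI ballI)
      show "normvec l (\<lambda>j. fst (u, snd r) j - (0::nat\<Rightarrow>int) j)"
        using vn i unfolding normvec_def by (auto simp: u_def w_def unitv_def)
      fix j assume j: "j \<in> {1..l}"
      have A: "\<delta>*b j \<le> q*a j" "0 \<le> q*a j" using AK[OF j] by auto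
      have V: "\<bar>real_of_int (v j)\<bar> \<le> b j + \<delta> * b j" using vb[OF j] by (simp add: algebra_simps)
      have e: "\<bar>2 * q * real (a j)\<bar> = 2 * (q * a j)" using A by simp
      show "\<bar>real_of_int (fst (u, snd r) j - (0::nat\<Rightarrow>int) j)\<bar> \<le> \<bar>2 * q * real (a j)\<bar>"
      proof (cases "j = i")
        case True
        hence "u j = v i - \<sigma> * b i" by (simp add: u_def w_def unitv_def)
        then show ?thesis using main V A True unfolding e by (auto simp: \<sigma>_def)
      next
        case False
        hence "u j = v j - max (- int (b j)) (min (int (b j)) (v j))" using j by (simp add: u_def w_def unitv_def)
        then show ?thesis using V A unfolding e by (auto simp: max_def min_def)
      qed
    qed
    have mem: "r \<in> msum {(\<lambda>j. \<sigma> * int (b i) * unitv i j, 0)}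
            (msum (rect l c ((\<lambda>j. real (b j))(i := 0))) (rect l 0 (\<lambda>j. 2 * q * real (a j))))"
      unfolding msum_mem using req w1 u2 by blast
    have yin: "y \<in> phi_img act l \<phi> d (msum {(\<lambda>j. \<sigma> * int (b i) * unitv i j, 0)}
            (msum (rect l c ((\<lambda>j. real (b j))(i := 0))) (rect l 0 (\<lambda>j. 2 * q * real (a j))))) x"
      unfolding phi_img_mem using mem r(2,3) by blast
    show ?thesis
    proof (cases "v i \<ge> 0")
      case True
      then show ?thesis using yin by (simp add: \<sigma>_def)
    next
      case False
      then show ?thesis using yin by (simp add: \<sigma>_def)
    qed
    qed
qed

end
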